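(* Let $\alpha$ be an integer. For every integer $n\geq 0$ and every $\alpha\geq 2$, $$\overline{B}_{2^\alpha,3}(4n+2)\equiv 0 \pmod 4 \quad\text{and}\quad \overline{B}_{2^\alpha,3}(8n+5)\equiv 0\pmod 4,$$ and for every $n\ge 0$ and every $\alpha\geq 3$, $$\overline{B}_{2^\alpha,3}(8n+6)\equiv 0\pmod 8.$$
   Context: An overpartition of a nonnegative integer $n$ is a partition of $n$ (a non-increasing sequence of positive integers summing to $n$) in which the first occurrence of each distinct part may be overlined. For relatively prime integers $\ell_1,\ell_2>1$, an $(\ell_1,\ell_2)$-biregular overpartition of $n$ is an overpartition of $n$ none of whose parts is divisible by $\ell_1$ or by $\ell_2$, and $\overline{B}_{\ell_1,\ell_2}(n)$ denotes the number of such overpartitions ($\overline{B}_{\ell_1,\ell_2}(0)=1$). Equivalently, writing $f_k=(q^k;q^k)_\infty=\prod_{m\ge1}(1-q^{km})$ for $|q|<1$, $$\sum_{n\ge0}\overline{B}_{\ell_1,\ell_2}(n)q^n=\frac{f_2\, f_{\ell_1}^2\, f_{\ell_2}^2\, f_{2\ell_1\ell_2}}{f_1^2\, f_{2\ell_1}\, f_{2\ell_2}\, f_{\ell_1\ell_2}^2}.$$ *)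

theory Defs
  imports Main "HOL-Library.Multiset"
begin

text \<open>An overpartition of n is represented as a pair (P, S): P is the multiset of
  (positive) parts summing to n, and S is the set of distinct part sizes whose first
  occurrence is overlined (so S is a subset of the set of parts).\<close>
definition overpartitions :: "nat \<Rightarrow> (nat multiset \<times> nat set) set" where
  "overpartitions n = {(P, S). (\<forall>p\<in>#P. 0 < p) \<and> sum_mset P = n \<and> S \<subseteq> set_mset P}"

definition biregular_overpartitions :: "nat \<Rightarrow> nat \<Rightarrow> nat \<Rightarrow> (nat multiset \<times> nat set) set" where
  "biregular_overpartitions l1 l2 n =
     {(P, S) \<in> overpartitions n. \<forall>p\<in>#P. \<not> l1 dvd p \<and> \<not> l2 dvd p}"

definition Bbar :: "nat \<Rightarrow> nat \<Rightarrow> nat \<Rightarrow> nat" where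
  "Bbar l1 l2 n = card (biregular_overpartitions l1 l2 n)"

end

theory Submission
  imports Defs "HOL-Computational_Algebra.Formal_Power_Series" "HOL-Library.Numeral_Type"
begin

unbundle fps_syntax


definition OP :: "nat set \<Rightarrow> nat \<Rightarrow> (nat multiset \<times> nat set) set" where
  "OP S n = {(P,T). (P,T) \<in> overpartitions n \<and> set_mset P \<subseteq> S}"

lemma mem_le_sum_mset: "(p::nat) \<in># P \<Longrightarrow> p \<le> sum_mset P"
proof -
  assume "p \<in># P"
  then obtain Q where "P = add_mset p Q" by (blast dest: multi_member_split)
  then show ?thesis by simp
qed

lemma size_le_sum_mset: "(\<forall>p\<in>#P. 0 < (p::nat)) \<Longrightarrow> size P \<le> sum_mset P"
proof (induction P)
  case empty then show ?case by simp
next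
  case (add x P) then show ?case by auto
qed

lemma finite_msets: "finite {P. set_mset P \<subseteq> A \<and> size P \<le> n}" if "finite A"
proof -
  have "{P. set_mset P \<subseteq> A \<and> size P \<le> n} \<subseteq> mset ` {xs. set xs \<subseteq> A \<and> length xs \<le> n}"
  proof
    fix P assume "P \<in> {P. set_mset P \<subseteq> A \<and> size P \<le> n}"
    moreover obtain xs where "mset xs = P" using ex_mset by blast
    ultimately show "P \<in> mset ` {xs. set xs \<subseteq> A \<and> length xs \<le> n}"
      by (intro image_eqI[of _ _ xs]) auto
  qed
  moreover have "finite {xs. set xs \<subseteq> A \<and> length xs \<le> n}"
    using finite_lists_length_le[OF that] by simp
  ultimately show ?thesis by (meson finite_imageI finite_subset)
qed

lemma finite_overpartitions: "finite (overpartitions n)"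
proof -
  have "overpartitions n \<subseteq> {P. set_mset P \<subseteq> {1..n} \<and> size P \<le> n} \<times> Pow {1..n}"
  proof
    fix x assume x: "x \<in> overpartitions n"
    obtain P T where xe: "x = (P,T)" by (cases x)
    have pos: "\<forall>p\<in>#P. 0 < p" and s: "sum_mset P = n" and T: "T \<subseteq> set_mset P"
      using x xe by (auto simp: overpartitions_def)
    have "set_mset P \<subseteq> {1..n}"
      using pos s mem_le_sum_mset by fastforce
    moreover have "size P \<le> n" using size_le_sum_mset[OF pos] s by simp
    ultimately show "x \<in> {P. set_mset P \<subseteq> {1..n} \<and> size P \<le> n} \<times> Pow {1..n}"
      using T xe by auto
  qed
  then show ?thesis using finite_msets[of "{1..n}" n] by (meson finite_Pow_iff finite_SigmaI finite_atLeastAtMost finite_subset)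
qed

lemma finite_OP: "finite (OP S n)"
  by (rule finite_subset[OF _ finite_overpartitions[of n]]) (auto simp: OP_def)

lemma OP_empty: "card (OP {} n) = (if n = 0 then 1 else 0)"
proof -
  have "OP {} n = (if n = 0 then {({#},{})} else {})"
    by (auto simp: OP_def overpartitions_def)
  then show ?thesis by simp
qed

lemma mset_split_k: "filter_mset (\<lambda>x. x \<noteq> k) P + replicate_mset (count P k) k = P"
  by (auto simp: multiset_eq_iff)

lemma OP_insert:
  assumes "k \<notin> S" "0 < k"
  shows "card (OP (insert k S) n) = card (OP S n) + 2 * (\<Sum>j\<in>{1..n div k}. card (OP S (n - j*k)))"
proof -
  define J where "J = {(j,b). j \<le> n div k \<and> (b \<longrightarrow> 0 < j)}"
  define Z where "Z = (SIGMA jb:J. OP S (n - fst jb * k))"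
  define f where "f = (\<lambda>(P::nat multiset,T::nat set). ((count P k, k \<in> T), (filter_mset (\<lambda>x. x \<noteq> k) P, T - {k})))"
  define g where "g = (\<lambda>((j::nat,b::bool),(P::nat multiset,T::nat set)). (P + replicate_mset j k, if b then insert k T else T))"
  have bij: "bij_betw f (OP (insert k S) n) Z"
  proof (rule bij_betw_byWitness[where f'=g])
    show "\<forall>a\<in>OP (insert k S) n. g (f a) = a"
    proof
      fix a assume "a \<in> OP (insert k S) n"
      obtain P T where a: "a = (P,T)" by (cases a)
      have "filter_mset (\<lambda>x. x \<noteq> k) P + replicate_mset (count P k) k = P"
        by (rule mset_split_k)
      then show "g (f a) = a" by (auto simp: a f_def g_def)
    qed
  next
    show "\<forall>a\<in>Z. f (g a) = a"
    proof
      fix z assume z: "z \<in> Z"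
      obtain j b P T where ze: "z = ((j,b),(P,T))" by (metis prod.collapse)
      have PS: "set_mset P \<subseteq> S" and TP: "T \<subseteq> set_mset P"
        using z ze by (auto simp: Z_def OP_def overpartitions_def)
      have kP: "count P k = 0" using PS assms(1) by (meson count_inI in_mono)
      have kT: "k \<notin> T" using TP PS assms(1) by auto
      have "filter_mset (\<lambda>x. x \<noteq> k) P = P"
        using kP by (auto simp: multiset_eq_iff)
      then show "f (g z) = z" using kP kT by (auto simp: ze f_def g_def)
    qed
  next
    show "f ` OP (insert k S) n \<subseteq> Z"
    proof
      fix y assume "y \<in> f ` OP (insert k S) n"
      then obtain P T where PT: "(P,T) \<in> OP (insert k S) n" and y: "y = f (P,T)" by auto
      have pos: "\<forall>p\<in>#P. 0 < p" and s: "sum_mset P = n" and T: "T \<subseteq> set_mset P"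
        and PS: "set_mset P \<subseteq> insert k S"
        using PT by (auto simp: OP_def overpartitions_def)
      define P' where "P' = filter_mset (\<lambda>x. x \<noteq> k) P"
      have decomp: "P = P' + replicate_mset (count P k) k"
        unfolding P'_def
        by (rule mset_split_k[symmetric])
      have sP: "sum_mset P = sum_mset P' + count P k * k"
        by (subst decomp) (simp add: sum_mset_replicate_mset)
      have j: "count P k \<le> n div k"
        using sP s assms(2) by (simp add: less_eq_div_iff_mult_less_eq)
      have b: "k \<in> T \<longrightarrow> 0 < count P k" using T by auto
      have "(P', T - {k}) \<in> OP S (n - count P k * k)"
        using pos PS T sP s by (auto simp: OP_def overpartitions_def P'_def)
      then show "y \<in> Z" using j b by (auto simp: y f_def Z_def J_def P'_def)
    qed
  next
    show "g ` Z \<subseteq> OP (insert k S) n"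
    proof
      fix y assume "y \<in> g ` Z"
      then obtain j b P T where z: "((j,b),(P,T)) \<in> Z" and y: "y = g ((j,b),(P,T))"
        by (metis imageE prod.collapse)
      have pos: "\<forall>p\<in>#P. 0 < p" and s: "sum_mset P = n - j*k" and T: "T \<subseteq> set_mset P"
        and PS: "set_mset P \<subseteq> S" and jn: "j \<le> n div k" and bj: "b \<longrightarrow> 0 < j"
        using z by (auto simp: Z_def J_def OP_def overpartitions_def)
      have "j * k \<le> n" using jn assms(2) by (simp add: less_eq_div_iff_mult_less_eq)
      then have "sum_mset (P + replicate_mset j k) = n"
        using s by (simp add: sum_mset_replicate_mset)
      then show "y \<in> OP (insert k S) n"
        using pos T PS bj assms(2) by (auto simp: y g_def OP_def overpartitions_def)
    qed
  qed
  have fJ: "finite J"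
    by (rule finite_subset[of _ "{..n div k} \<times> UNIV"]) (auto simp: J_def)
  have "card (OP (insert k S) n) = card Z" using bij bij_betw_same_card by blast
  also have "\<dots> = (\<Sum>jb\<in>J. card (OP S (n - fst jb * k)))"
    unfolding Z_def using fJ finite_OP by (simp add: card_SigmaI)
  also have "J = (\<lambda>j. (j,False)) ` {..n div k} \<union> (\<lambda>j. (j,True)) ` {1..n div k}"
    by (auto simp: J_def image_iff)
  also have "(\<Sum>jb\<in>\<dots>. card (OP S (n - fst jb * k)))
     = (\<Sum>j\<in>{..n div k}. card (OP S (n - j * k))) + (\<Sum>j\<in>{1..n div k}. card (OP S (n - j * k)))"
    by (subst sum.union_disjoint) (auto simp: sum.reindex inj_on_def)
  also have "(\<Sum>j\<in>{..n div k}. card (OP S (n - j * k))) = card (OP S n) + (\<Sum>j\<in>{1..n div k}. card (OP S (n - j * k)))"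
  proof -
    have "{..n div k} = insert 0 {1..n div k}" by auto
    then show ?thesis by simp
  qed
  finally show ?thesis by simp
qed





definition ak :: "nat \<Rightarrow> 'a::comm_ring_1 fps" where
  "ak k = Abs_fps (\<lambda>n. if 0 < n \<and> k dvd n then 1 else 0)"

definition PiS :: "nat set \<Rightarrow> 'a::comm_ring_1 fps" where
  "PiS S = (\<Prod>k\<in>S. 1 + 2 * ak k)"

lemma fps_two_mult_nth: "((2::'a::comm_ring_1 fps) * f) $ n = 2 * f $ n"
  by (simp only: numeral_fps_const fps_mult_left_const_nth)

lemma ak_conv:
  assumes "0 < k"
  shows "((ak k :: 'a::comm_ring_1 fps) * f) $ n = (\<Sum>j\<in>{1..n div k}. f $ (n - j*k))"
proof -
  have "(ak k * f) $ n = (\<Sum>i=0..n. (ak k :: 'a fps) $ i * f $ (n - i))" by (rule fps_mult_nth)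
  also have "\<dots> = (\<Sum>i=0..n. if 0 < i \<and> k dvd i then f $ (n - i) else 0)"
    by (rule sum.cong) (auto simp: ak_def)
  also have "\<dots> = (\<Sum>i\<in>{i\<in>{0..n}. 0 < i \<and> k dvd i}. f $ (n - i))"
    by (rule sum.inter_filter[symmetric]) simp
  also have "{i\<in>{0..n}. 0 < i \<and> k dvd i} = (\<lambda>j. j*k) ` {1..n div k}"
  proof
    show "{i\<in>{0..n}. 0 < i \<and> k dvd i} \<subseteq> (\<lambda>j. j*k) ` {1..n div k}"
    proof
      fix i assume i: "i \<in> {i\<in>{0..n}. 0 < i \<and> k dvd i}"
      then obtain j where j: "i = j * k" by (metis dvd_def mult.commute mem_Collect_eq)
      have "1 \<le> j" using i j by (cases j) auto
      moreover have "j \<le> n div k" using i j assms by (simp add: less_eq_div_iff_mult_less_eq)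
      ultimately show "i \<in> (\<lambda>j. j*k) ` {1..n div k}" using j by auto
    qed
  next
    show "(\<lambda>j. j*k) ` {1..n div k} \<subseteq> {i\<in>{0..n}. 0 < i \<and> k dvd i}"
      using assms by (auto simp: less_eq_div_iff_mult_less_eq)
  qed
  also have "(\<Sum>i\<in>(\<lambda>j. j*k) ` {1..n div k}. f $ (n - i)) = (\<Sum>j\<in>{1..n div k}. f $ (n - j*k))"
    using assms by (subst sum.reindex) (auto simp: inj_on_def)
  finally show ?thesis .
qed

lemma PiS_coeff:
  "finite S \<Longrightarrow> 0 \<notin> S \<Longrightarrow> (PiS S :: 'a::comm_ring_1 fps) $ n = of_nat (card (OP S n))"
proof (induction S arbitrary: n rule: finite_induct)
  case empty
  then show ?case by (simp add: PiS_def OP_empty)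
next
  case (insert k S)
  have k0: "0 < k" using insert by auto
  have "(PiS (insert k S) :: 'a fps) = PiS S + 2 * (ak k * PiS S)"
    using insert by (simp add: PiS_def algebra_simps)
  then have "(PiS (insert k S) :: 'a fps) $ n = PiS S $ n + 2 * (ak k * PiS S) $ n"
    by (simp add: fps_two_mult_nth)
  also have "\<dots> = of_nat (card (OP S n)) + 2 * (\<Sum>j\<in>{1..n div k}. of_nat (card (OP S (n - j*k))))"
    using insert k0 by (simp add: ak_conv)
  also have "\<dots> = of_nat (card (OP (insert k S) n))"
    using OP_insert[OF insert(2) k0] by simp
  finally show ?case .
qed

definition dil :: "nat \<Rightarrow> 'a::comm_ring_1 fps \<Rightarrow> 'a fps" where
  "dil m f = Abs_fps (\<lambda>n. if m dvd n then f $ (n div m) else 0)"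

lemma dil_nth: "dil m f $ n = (if m dvd n then f $ (n div m) else 0)"
  by (simp add: dil_def)

lemma dil_mult:
  assumes "0 < m"
  shows "dil m (f * g) = dil m f * dil m g"
proof (rule fps_ext)
  fix n
  show "dil m (f*g) $ n = (dil m f * dil m g) $ n"
  proof (cases "m dvd n")
    case True
    then obtain t where n: "n = m * t" by blast
    have "(dil m f * dil m g) $ n = (\<Sum>i=0..n. dil m f $ i * dil m g $ (n - i))" by (rule fps_mult_nth)
    also have "\<dots> = (\<Sum>i\<in>(\<lambda>j. m*j) ` {0..t}. dil m f $ i * dil m g $ (n - i))"
    proof (rule sum.mono_neutral_right)
      show "finite {0..n}" by simp
      show "(\<lambda>j. m*j) ` {0..t} \<subseteq> {0..n}" using n by auto
      show "\<forall>i\<in>{0..n} - (\<lambda>j. m*j) ` {0..t}. dil m f $ i * dil m g $ (n - i) = 0"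
      proof
        fix i assume i: "i \<in> {0..n} - (\<lambda>j. m*j) ` {0..t}"
        show "dil m f $ i * dil m g $ (n - i) = 0"
        proof (cases "m dvd i")
          case True
          then obtain j where j: "i = m*j" by blast
          then have "m * j \<le> m * t" using i n by auto
          then have "j \<le> t" using assms by simp
          with i j have False by auto
          then show ?thesis ..
        next
          case False then show ?thesis by (simp add: dil_nth)
        qed
      qed
    qed
    also have "\<dots> = (\<Sum>j=0..t. dil m f $ (m*j) * dil m g $ (n - m*j))"
      using assms by (subst sum.reindex) (auto simp: inj_on_def)
    also have "\<dots> = (\<Sum>j=0..t. f $ j * g $ (t - j))"
    proof (rule sum.cong[OF refl])
      fix j assume "j \<in> {0..t}"
      then have "n - m*j = m*(t-j)" using n by (simp add: diff_mult_distrib2)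
      then show "dil m f $ (m*j) * dil m g $ (n - m*j) = f $ j * g $ (t - j)"
        using assms by (simp add: dil_nth)
    qed
    also have "\<dots> = (f*g) $ t" by (simp add: fps_mult_nth)
    also have "\<dots> = dil m (f*g) $ n" using n assms by (simp add: dil_nth)
    finally show ?thesis by simp
  next
    case False
    have "(dil m f * dil m g) $ n = (\<Sum>i=0..n. dil m f $ i * dil m g $ (n - i))" by (rule fps_mult_nth)
    also have "\<dots> = 0"
    proof (rule sum.neutral, rule ballI)
      fix i assume i: "i \<in> {0..n}"
      show "dil m f $ i * dil m g $ (n - i) = 0"
      proof (cases "m dvd i \<and> m dvd (n - i)")
        case True
        then have "m dvd i + (n - i)" by (simp add: dvd_add)
        with i False show ?thesis by simp
      next
        case False then show ?thesis by (auto simp: dil_nth)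
      qed
    qed
    finally show ?thesis using False by (simp add: dil_nth)
  qed
qed

lemma dil_one: "0 < m \<Longrightarrow> dil m 1 = 1"
proof (rule fps_ext)
  fix n assume m: "0 < m"
  show "dil m 1 $ n = 1 $ n"
  proof (cases "m dvd n")
    case True
    then obtain t where "n = m*t" by blast
    then show ?thesis using m by (simp add: dil_nth)
  next
    case False
    have "n \<noteq> 0"
    proof
      assume "n = 0" with False show False by simp
    qed
    then show ?thesis using False by (simp add: dil_nth)
  qed
qed

lemma dil_add: "dil m (f + g) = dil m f + dil m g"
  by (rule fps_ext) (simp add: dil_nth)

lemma dil_lin: "0 < m \<Longrightarrow> dil m (1 + 2 * f) = 1 + 2 * dil m f"
  by (simp only: mult_2 dil_add dil_one)

lemma dil_ak: "0 < m \<Longrightarrow> dil m (ak k) = ak (m*k)"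
proof (rule fps_ext)
  fix n assume m: "0 < m"
  show "dil m (ak k) $ n = ak (m*k) $ n"
  proof (cases "m dvd n")
    case True
    then obtain t where "n = m*t" by blast
    then show ?thesis using m by (simp add: dil_nth ak_def)
  next
    case False
    then have "\<not> m*k dvd n" using dvd_mult_left by blast
    then show ?thesis using False by (simp add: dil_nth ak_def)
  qed
qed

lemma dil_prod: "0 < m \<Longrightarrow> dil m (\<Prod>k\<in>S. h k) = (\<Prod>k\<in>S. dil m (h k))"
proof (induction S rule: infinite_finite_induct)
  case (infinite A) then show ?case by (simp add: dil_one)
next
  case empty then show ?case by (simp add: dil_one)
next
  case (insert x F) then show ?case by (simp add: dil_mult)
qed

lemma PiS_image: "0 < m \<Longrightarrow> (PiS ((\<lambda>j. m*j) ` S) :: 'a::comm_ring_1 fps) = dil m (PiS S)"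
  unfolding PiS_def
  by (subst prod.reindex) (auto simp: inj_on_def dil_prod dil_lin dil_ak)

type_synonym z8 = "8"

definition E1 :: "nat \<Rightarrow> 'a::comm_ring_1 fps" where "E1 L = (\<Sum>k\<in>{1..L}. ak k)"
definition E2 :: "nat \<Rightarrow> 'a::comm_ring_1 fps" where
  "E2 L = (\<Sum>l\<in>{1..L}. \<Sum>k\<in>{1..<l}. ak k * ak l)"

lemma eight_fps: "(8::z8 fps) = 0" by (simp add: numeral_fps_const)

lemma PiS_expand: "(PiS {1..L} :: z8 fps) = 1 + 2 * E1 L + 4 * E2 L"
proof (induction L)
  case 0 then show ?case by (simp add: PiS_def E1_def E2_def)
next
  case (Suc L)
  have ins: "{1..Suc L} = insert (Suc L) {1..L}" by auto
  have P: "(PiS {1..Suc L} :: z8 fps) = (1 + 2 * ak (Suc L)) * PiS {1..L}"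
    by (simp add: PiS_def ins)
  have e1: "(E1 (Suc L) :: z8 fps) = E1 L + ak (Suc L)"
    by (simp add: E1_def ins)
  have "{1..<Suc L} = {1..L}" by auto
  then have e2: "(E2 (Suc L) :: z8 fps) = E2 L + E1 L * ak (Suc L)"
    by (simp add: E2_def E1_def ins sum_distrib_right)
  have alg: "(1 + 2*a) * (1 + 2*x + 4*y) = 1 + 2*(x + a) + 4*(y + x*a) + 8*(a*y)"
    for a x y :: "z8 fps" by (simp add: algebra_simps)
  show ?case using P e1 e2 Suc alg[of "ak (Suc L)" "E1 L" "E2 L"] eight_fps by simp
qed





definition dv :: "nat \<Rightarrow> nat" where "dv n = card {k\<in>{1..n}. k dvd n}"

definition Qs :: "nat \<Rightarrow> nat \<Rightarrow> (nat \<times> nat \<times> nat) set" where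
  "Qs L n = (SIGMA l:{1..L}. SIGMA k:{1..<l}. {i\<in>{0..n}. 0 < i \<and> k dvd i \<and> 0 < n - i \<and> l dvd (n - i)})"

lemma sum_indicator: "finite A \<Longrightarrow> (\<Sum>x\<in>A. if P x then 1 else 0) = (of_nat (card {x\<in>A. P x}) :: 'a::comm_semiring_1)"
  by (simp add: sum.inter_filter[symmetric])

lemma E1_nth:
  assumes "n \<le> L"
  shows "(E1 L :: 'a::comm_ring_1 fps) $ n = of_nat (dv n)"
proof -
  have "(E1 L :: 'a fps) $ n = (\<Sum>k\<in>{1..L}. if 0 < n \<and> k dvd n then 1 else 0)"
    by (simp add: E1_def fps_sum_nth ak_def)
  also have "\<dots> = of_nat (card {k\<in>{1..L}. 0 < n \<and> k dvd n})"
    by (rule sum_indicator) simp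
  also have "{k\<in>{1..L}. 0 < n \<and> k dvd n} = {k\<in>{1..n}. k dvd n}"
    using assms by (auto dest: dvd_imp_le)
  finally show ?thesis by (simp add: dv_def)
qed

lemma ak_ak_nth:
  "((ak k :: 'a::comm_ring_1 fps) * ak l) $ n
     = of_nat (card {i\<in>{0..n}. 0 < i \<and> k dvd i \<and> 0 < n - i \<and> l dvd (n - i)})"
proof -
  have "((ak k :: 'a fps) * ak l) $ n = (\<Sum>i=0..n. if 0 < i \<and> k dvd i \<and> 0 < n - i \<and> l dvd (n - i) then 1 else 0)"
    unfolding fps_mult_nth by (rule sum.cong) (auto simp: ak_def)
  also have "\<dots> = of_nat (card {i\<in>{0..n}. 0 < i \<and> k dvd i \<and> 0 < n - i \<and> l dvd (n - i)})"
    by (rule sum_indicator) simp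
  finally show ?thesis .
qed

lemma E2_nth: "(E2 L :: 'a::comm_ring_1 fps) $ n = of_nat (card (Qs L n))"
proof -
  have "(E2 L :: 'a fps) $ n = (\<Sum>l\<in>{1..L}. \<Sum>k\<in>{1..<l}. of_nat (card {i\<in>{0..n}. 0 < i \<and> k dvd i \<and> 0 < n - i \<and> l dvd (n - i)}))"
    by (simp add: E2_def fps_sum_nth ak_ak_nth)
  also have "\<dots> = of_nat (\<Sum>l\<in>{1..L}. \<Sum>k\<in>{1..<l}. card {i\<in>{0..n}. 0 < i \<and> k dvd i \<and> 0 < n - i \<and> l dvd (n - i)})"
    by simp
  also have "(\<Sum>l\<in>{1..L}. \<Sum>k\<in>{1..<l}. card {i\<in>{0..n}. 0 < i \<and> k dvd i \<and> 0 < n - i \<and> l dvd (n - i)}) = card (Qs L n)"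
    unfolding Qs_def by (simp add: card_SigmaI)
  finally show ?thesis .
qed

lemma inv_even:
  "finite A \<Longrightarrow> (\<forall>x\<in>A. f x \<in> A \<and> f (f x) = x \<and> f x \<noteq> x) \<Longrightarrow> even (card A)"
proof (induction "card A" arbitrary: A rule: less_induct)
  case less
  show ?case
  proof (cases "A = {}")
    case True then show ?thesis by simp
  next
    case False
    then obtain x where x: "x \<in> A" by blast
    define B where "B = A - {x, f x}"
    have fx: "f x \<in> A" "f x \<noteq> x" "f (f x) = x" using less.prems x by auto
    have c2: "card {x, f x} = 2" using fx by simp
    have cB: "card B = card A - 2" unfolding B_def
      using x fx less.prems(1) c2 by (subst card_Diff_subset) auto
    have cA: "2 \<le> card A"
      using c2 x fx less.prems(1) by (metis card_mono empty_subsetI insert_subset)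
    have "\<forall>y\<in>B. f y \<in> B \<and> f (f y) = y \<and> f y \<noteq> y"
    proof
      fix y assume y: "y \<in> B"
      then have yA: "y \<in> A" "y \<noteq> x" "y \<noteq> f x" by (auto simp: B_def)
      have "f y \<in> A" "f (f y) = y" "f y \<noteq> y" using less.prems yA by auto
      moreover have "f y \<noteq> x" using \<open>f (f y) = y\<close> yA by auto
      moreover have "f y \<noteq> f x" using \<open>f (f y) = y\<close> fx yA by metis
      ultimately show "f y \<in> B \<and> f (f y) = y \<and> f y \<noteq> y" by (auto simp: B_def)
    qed
    moreover have "card B < card A" using cB cA by simp
    moreover have "finite B" using less.prems(1) by (simp add: B_def)
    ultimately have "even (card B)" using less.hyps by blast
    then show ?thesis using cB cA by (metis add_diff_inverse_nat even_add odd_two_times_div_two_nat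
          not_less dvd_refl)
  qed
qed

lemma dv_odd_sq:
  assumes "odd (dv n)" shows "\<exists>s. n = s * s"
proof (rule ccontr)
  assume ns: "\<not> (\<exists>s. n = s * s)"
  define A where "A = {k\<in>{1..n}. k dvd n}"
  have "\<forall>k\<in>A. n div k \<in> A \<and> n div (n div k) = k \<and> n div k \<noteq> k"
  proof
    fix k assume k: "k \<in> A"
    then obtain q where q: "n = k * q" and k1: "1 \<le> k" and kn: "k \<le> n" by (auto simp: A_def)
    have "0 < n" using k1 kn by simp
    then have q1: "0 < q" using q by (cases q) auto
    have d1: "n div k = q" using q k1 by simp
    have d2: "n div q = k" using q q1 by simp
    have "q \<le> n" using q k1 by (metis dvd_imp_le dvd_triv_right \<open>0 < n\<close>)
    moreover have "q \<noteq> k" using ns q by blast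
    ultimately show "n div k \<in> A \<and> n div (n div k) = k \<and> n div k \<noteq> k"
      using d1 d2 q1 q by (auto simp: A_def)
  qed
  then have "even (card A)" by (intro inv_even[of A "\<lambda>k. n div k"]) (auto simp: A_def)
  with assms show False by (simp add: dv_def A_def)
qed

lemma dv_double:
  assumes "odd t" shows "dv (2*t) = 2 * dv t"
proof -
  define A where "A = {k\<in>{1..t}. k dvd t}"
  have eq: "{k\<in>{1..2*t}. k dvd 2*t} = A \<union> (\<lambda>k. 2*k) ` A"
  proof
    show "{k\<in>{1..2*t}. k dvd 2*t} \<subseteq> A \<union> (\<lambda>k. 2*k) ` A"
    proof
      fix k assume k: "k \<in> {k\<in>{1..2*t}. k dvd 2*t}"
      have t0: "0 < t" using assms by (cases t) auto
      show "k \<in> A \<union> (\<lambda>k. 2*k) ` A"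
      proof (cases "even k")
        case True
        then obtain j where j: "k = 2*j" by blast
        then have "j dvd t" using k by auto
        then have "j \<in> A" using j k t0 by (auto simp: A_def dest: dvd_imp_le)
        then show ?thesis using j by blast
      next
        case False
        then have "coprime k 2" by simp
        then have "k dvd t" using k by (metis coprime_dvd_mult_right_iff mem_Collect_eq mult.commute)
        then have "k \<in> A" using k t0 by (auto simp: A_def dest: dvd_imp_le)
        then show ?thesis by blast
      qed
    qed
  next
    show "A \<union> (\<lambda>k. 2*k) ` A \<subseteq> {k\<in>{1..2*t}. k dvd 2*t}"
      by (auto simp: A_def)
  qed
  have disj: "A \<inter> (\<lambda>k. 2*k) ` A = {}"
  proof -
    have ao: "\<forall>k\<in>A. odd k"
    proof
      fix k assume "k \<in> A"
      then have "k dvd t" by (simp add: A_def)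
      then show "odd k" using assms dvd_trans[of 2 k t] by auto
    qed
    show ?thesis
    proof (rule ccontr)
      assume "A \<inter> (\<lambda>k. 2*k) ` A \<noteq> {}"
      then obtain y j where y: "y \<in> A" "j \<in> A" "y = 2*j" by blast
      then have "odd y" using ao by blast
      then show False using y(3) by simp
    qed
  qed
  have "card (A \<union> (\<lambda>k. 2*k) ` A) = card A + card ((\<lambda>k. 2*k) ` A)"
  proof (rule card_Un_disjoint)
    show "finite A" by (simp add: A_def)
    then show "finite ((\<lambda>k. 2*k) ` A)" by simp
    show "A \<inter> (\<lambda>k. 2*k) ` A = {}" by (rule disj)
  qed
  also have "card ((\<lambda>k. 2*k) ` A) = card A" by (rule card_image) (auto simp: inj_on_def)
  finally show ?thesis using eq by (simp add: dv_def A_def)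
qed

lemma Qs_even:
  assumes t: "odd t" and L: "2*t \<le> L"
  shows "even (card (Qs L (2*t)))"
proof -
  define n where "n = 2*t"
  define f where "f = (\<lambda>(l::nat,k::nat,i::nat). (i div k + (n - i) div l, (n - i) div l, ((n - i) div l) * (l - k)))"
  have key: "\<forall>x\<in>Qs L n. f x \<in> Qs L n \<and> f (f x) = x \<and> f x \<noteq> x"
  proof
    fix x assume x: "x \<in> Qs L n"
    obtain l k i where xe: "x = (l,k,i)" by (cases x) auto
    have l1: "1 \<le> l" and lL: "l \<le> L" and k1: "1 \<le> k" and kl: "k < l" and i0: "0 < i" and
      ki: "k dvd i" and ni: "0 < n - i" and lni: "l dvd (n - i)" and iN: "i \<le> n"
      using x xe by (auto simp: Qs_def)
    obtain p where p: "i = k * p" using ki by blast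
    obtain q where q: "n - i = l * q" using lni by blast
    have p1: "0 < p" using p i0 by (cases p) auto
    have q1: "0 < q" using q ni by (cases q) auto
    have divp: "i div k = p" using p k1 by simp
    have divq: "(n - i) div l = q" using q l1 by simp
    have nsum: "n = k*p + l*q" using p q iN by simp
    have fx: "f x = (p + q, q, q * (l - k))" by (simp add: f_def xe divp divq)
    have pqn: "p + q \<le> n" using nsum k1 l1
      by (metis add_le_mono mult_le_mono1 mult_1)
    have ni': "n - q * (l - k) = k * (p + q)"
      using nsum kl by (simp add: diff_mult_distrib2 algebra_simps)
    have "q * (l - k) \<le> q * l" by simp
    moreover have "q * l \<le> n" using nsum by (simp add: mult.commute)
    ultimately have qlk: "q * (l - k) \<le> n" by linarith
    have mem: "f x \<in> Qs L n"
    proof -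
      have "0 < q * (l - k)" using q1 kl by simp
      moreover have "0 < n - q * (l - k)" using ni' k1 p1 by simp
      moreover have "(p + q) dvd (n - q * (l - k))" using ni' by simp
      ultimately show ?thesis using fx pqn L q1 p1 qlk unfolding n_def[symmetric]
        by (auto simp: Qs_def)
    qed
    have ffx: "f (f x) = x"
    proof -
      have a: "(q * (l - k)) div q = l - k" using q1 by simp
      have b: "(n - q * (l - k)) div (p + q) = k" using ni' p1 by simp
      have "f (f x) = f (p + q, q, q * (l - k))" by (simp only: fx)
      also have "\<dots> = ((l - k) + k, k, k * ((p + q) - q))"
        by (simp add: f_def a b)
      also have "\<dots> = x" using kl p xe by simp
      finally show ?thesis .
    qed
    have neq: "f x \<noteq> x"
    proof
      assume "f x = x"
      then have e1: "p + q = l" and e2: "q = k" using fx xe by auto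
      have "n = k*p + l*q" by (rule nsum)
      also have "\<dots> = k*p + (p+k)*k" using e1 e2 by simp
      also have "\<dots> = k * (k + 2*p)" by (simp add: algebra_simps)
      finally have "n = k * (k + 2*p)" .
      then have nk: "2*t = k * (k + 2*p)" by (simp add: n_def)
      show False
      proof (cases "even k")
        case True
        then obtain a where a: "k = 2*a" by blast
        then have "2*t = 4 * (a * (a + p))" using nk by (simp add: algebra_simps)
        then have "t = 2 * (a * (a + p))" by simp
        with t show False by simp
      next
        case False
        then have "odd (k * (k + 2*p))" by simp
        with nk show False by (metis even_mult_iff even_numeral)
      qed
    qed
    show "f x \<in> Qs L n \<and> f (f x) = x \<and> f x \<noteq> x" using mem ffx neq by blast
  qed
  have "finite (Qs L n)" unfolding Qs_def by (intro finite_SigmaI) auto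
  then show ?thesis using key inv_even n_def by blast
qed





definition X :: "nat \<Rightarrow> 'a::comm_ring_1 fps" where "X L = E1 L + 2 * E2 L"
definition chi :: "nat \<Rightarrow> nat \<Rightarrow> nat" where "chi L j = dv j + 2 * card (Qs L j)"

lemma fps_num_mult_nth: "((numeral w::'a::comm_ring_1 fps) * f) $ n = numeral w * f $ n"
  by (simp only: numeral_fps_const fps_mult_left_const_nth)

lemma X_nth: "j \<le> L \<Longrightarrow> (X L :: 'a::comm_ring_1 fps) $ j = of_nat (chi L j)"
  by (simp add: X_def chi_def E1_nth E2_nth fps_num_mult_nth)

lemma PiS_X: "(PiS {1..L} :: z8 fps) = 1 + 2 * X L"
  unfolding X_def PiS_expand by (simp add: algebra_simps)

lemma char8: "CHAR(z8) = 8" by simp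

lemma z8_of_nat_0: "(of_nat n :: z8) = 0 \<longleftrightarrow> 8 dvd n"
  using of_nat_eq_0_iff_char_dvd[where 'a=z8] char8 by simp

lemma eight_z8: "(8::z8) = 0" by simp

lemma four_chi: "4 * (of_nat (chi L j) :: z8) = 4 * of_nat (dv j)"
proof -
  have "4 * (of_nat (chi L j) :: z8) = 4 * of_nat (dv j) + 8 * of_nat (card (Qs L j))"
    by (simp add: chi_def algebra_simps)
  then show ?thesis by (simp add: eight_z8)
qed

lemma four_sq: "4 * (of_nat m :: z8) * of_nat m = 4 * of_nat m"
proof -
  have ev: "even (m * (m - 1))" by (cases m) auto
  have "4*m*m = 4*m + 8*((m*(m-1)) div 2)"
  proof (cases m)
    case 0 then show ?thesis by simp
  next
    case (Suc r)
    have "8*((m*(m-1)) div 2) = 4*(m*(m-1))" using ev by auto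
    then show ?thesis using Suc by (simp add: algebra_simps)
  qed
  then have "(of_nat (4*m*m) :: z8) = of_nat (4*m) + of_nat (8*((m*(m-1)) div 2))" by simp
  also have "(of_nat (8*((m*(m-1)) div 2)) :: z8) = 0" by (simp add: eight_z8)
  finally show ?thesis by simp
qed

lemma dil_1: "dil 1 f = f"
  by (rule fps_ext) (simp add: dil_nth)

lemma dilX_nth:
  assumes "0 < e" "i \<le> M"
  shows "(dil e (X M) :: z8 fps) $ i = (if e dvd i then of_nat (chi M (i div e)) else 0)"
proof -
  have "i div e \<le> M" using assms by (meson div_le_dividend order_trans)
  then show ?thesis by (simp add: dil_nth X_nth)
qed

lemma nonsq: "n mod 8 \<notin> {0,1,4} \<Longrightarrow> n \<noteq> s * (s::nat)"
proof -
  assume a: "n mod 8 \<notin> {0,1,4}"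
  have r: "s mod 8 < 8" by simp
  have "(s*s) mod 8 = ((s mod 8)*(s mod 8)) mod 8" by (simp add: mod_mult_eq)
  moreover have "((s mod 8)*(s mod 8)) mod 8 \<in> {0,1,4}"
  proof -
    have "s mod 8 \<in> {0,1,2,3,4,5,6,7}" using r by auto
    then show ?thesis by auto
  qed
  ultimately show ?thesis using a by auto
qed

lemma sq8: "(s*s) mod 8 \<in> {0,1,4::nat}"
  using nonsq[of "s*s" s] by blast

lemma local8:
  fixes N e1 e2 s t :: nat
  assumes "N mod 8 = 6" "e1 mod 8 \<in> {0,1}" "e2 mod 8 \<in> {0,3}"
  shows "N \<noteq> e1*(s*s) + e2*(t*t)"
proof
  assume N: "N = e1*(s*s) + e2*(t*t)"
  have "(e1*(s*s) + e2*(t*t)) mod 8 = ((e1*(s*s)) mod 8 + (e2*(t*t)) mod 8) mod 8"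
    by (rule mod_add_eq[symmetric])
  also have "(e1*(s*s)) mod 8 = ((e1 mod 8)*((s*s) mod 8)) mod 8" by (rule mod_mult_eq[symmetric])
  also have "(e2*(t*t)) mod 8 = ((e2 mod 8)*((t*t) mod 8)) mod 8" by (rule mod_mult_eq[symmetric])
  also have "(((e1 mod 8)*((s*s) mod 8)) mod 8 + ((e2 mod 8)*((t*t) mod 8)) mod 8) mod 8
     = ((e1 mod 8)*((s*s) mod 8) + (e2 mod 8)*((t*t) mod 8)) mod 8" by (rule mod_add_eq)
  finally have "(e1*(s*s) + e2*(t*t)) mod 8 = ((e1 mod 8)*((s*s) mod 8) + (e2 mod 8)*((t*t) mod 8)) mod 8" .
  moreover have "(s*s) mod 8 \<in> {0,1,4}" "(t*t) mod 8 \<in> {0,1,4}" using sq8 by auto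
  ultimately have "N mod 8 \<noteq> 6" using assms(2,3) N by auto
  with assms(1) show False by simp
qed

lemma pair0:
  assumes e: "0 < e1" "0 < e2" and M: "N \<le> M1" "N \<le> M2"
    and nr: "\<And>s t. N \<noteq> e1*(s*s) + e2*(t*t)"
  shows "4 * (dil e1 (X M1) * dil e2 (X M2) :: z8 fps) $ N = 0"
proof -
  have "4 * (dil e1 (X M1) * dil e2 (X M2) :: z8 fps) $ N
      = (\<Sum>i=0..N. 4 * ((dil e1 (X M1) :: z8 fps) $ i * dil e2 (X M2) $ (N - i)))"
    by (simp add: fps_mult_nth sum_distrib_left)
  also have "\<dots> = 0"
  proof (rule sum.neutral, rule ballI)
    fix i assume i: "i \<in> {0..N}"
    show "4 * ((dil e1 (X M1) :: z8 fps) $ i * dil e2 (X M2) $ (N - i)) = 0"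
    proof (cases "e1 dvd i \<and> e2 dvd (N - i)")
      case False
      then show ?thesis using i M e by (auto simp: dilX_nth)
    next
      case True
      define u where "u = i div e1"
      define v where "v = (N - i) div e2"
      have iu: "i = e1 * u" using True u_def by simp
      have iv: "N - i = e2 * v" using True v_def by simp
      have "4 * ((dil e1 (X M1) :: z8 fps) $ i * dil e2 (X M2) $ (N - i))
          = 4 * of_nat (chi M1 u) * of_nat (chi M2 v)"
        using True i M e by (simp add: dilX_nth u_def v_def)
      also have "\<dots> = of_nat (dv u) * (4 * of_nat (chi M2 v))"
      proof -
        have "(4 * of_nat (chi M1 u) :: z8) * of_nat (chi M2 v) = 4 * of_nat (dv u) * of_nat (chi M2 v)"
          by (simp only: four_chi)
        then show ?thesis by (simp add: algebra_simps)
      qed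
      also have "\<dots> = of_nat (4 * dv u * dv v)"
        by (simp add: four_chi)
      also have "\<dots> = 0"
      proof -
        have "even (dv u) \<or> even (dv v)"
        proof (rule ccontr)
          assume "\<not> (even (dv u) \<or> even (dv v))"
          then obtain s t where "u = s*s" "v = t*t" using dv_odd_sq by blast
          then have "N = e1*(s*s) + e2*(t*t)" using iu iv i by simp
          with nr show False by blast
        qed
        then have "8 dvd 4 * dv u * dv v" by auto
        then show ?thesis by (simp only: z8_of_nat_0)
      qed
      finally show ?thesis .
    qed
  qed
  finally show ?thesis .
qed

lemma sym_sum:
  fixes f :: "nat \<Rightarrow> z8"
  shows "4 * (\<Sum>i=0..2*k. f i * f (2*k - i)) = 4 * (f k * f k)"
proof -
  have split: "{0..2*k} = insert k ({0..<k} \<union> {k<..2*k})" by auto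
  have s2: "(\<Sum>i\<in>{k<..2*k}. f i * f (2*k - i)) = (\<Sum>i\<in>{0..<k}. f i * f (2*k - i))"
  proof (rule sum.reindex_bij_witness[of _ "\<lambda>i. 2*k - i" "\<lambda>i. 2*k - i"])
    show "\<And>a. a \<in> {0..<k} \<Longrightarrow> 2 * k - (2 * k - a) = a" by auto
    show "\<And>a. a \<in> {0..<k} \<Longrightarrow> 2 * k - a \<in> {k<..2 * k}" by auto
    show "\<And>b. b \<in> {k<..2 * k} \<Longrightarrow> 2 * k - (2 * k - b) = b" by auto
    show "\<And>b. b \<in> {k<..2 * k} \<Longrightarrow> 2 * k - b \<in> {0..<k}" by auto
    show "\<And>b. b \<in> {k<..2 * k} \<Longrightarrow> f (2 * k - b) * f (2 * k - (2 * k - b)) = f b * f (2 * k - b)"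
      by (auto simp: mult.commute)
  qed
  have "(\<Sum>i=0..2*k. f i * f (2*k - i)) = (\<Sum>i\<in>{0..<k}. f i * f (2*k - i)) + f k * f k
        + (\<Sum>i\<in>{k<..2*k}. f i * f (2*k - i))"
  proof -
    have "(\<Sum>i=0..2*k. f i * f (2*k - i)) = f k * f k + (\<Sum>i\<in>{0..<k} \<union> {k<..2*k}. f i * f (2*k - i))"
      by (simp add: split)
    also have "(\<Sum>i\<in>{0..<k} \<union> {k<..2*k}. f i * f (2*k - i)) = (\<Sum>i\<in>{0..<k}. f i * f (2*k - i)) + (\<Sum>i\<in>{k<..2*k}. f i * f (2*k - i))"
      by (rule sum.union_disjoint) auto
    finally show ?thesis by (simp add: algebra_simps)
  qed
  then have "4 * (\<Sum>i=0..2*k. f i * f (2*k - i)) = 8 * (\<Sum>i\<in>{0..<k}. f i * f (2*k - i)) + 4 * (f k * f k)"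
    using s2 by (simp add: algebra_simps)
  then show ?thesis by (simp add: eight_z8)
qed





lemma PiS_union: "finite S1 \<Longrightarrow> finite S2 \<Longrightarrow> S1 \<inter> S2 = {} \<Longrightarrow> PiS (S1 \<union> S2) = PiS S1 * PiS S2"
  unfolding PiS_def by (rule prod.union_disjoint)

lemma mult_image:
  fixes m r :: nat
  assumes "0 < m" shows "{k\<in>{1..m*r}. m dvd k} = (\<lambda>j. m*j) ` {1..r}"
proof
  show "{k\<in>{1..m*r}. m dvd k} \<subseteq> (\<lambda>j. m*j) ` {1..r}"
  proof
    fix k assume k: "k \<in> {k\<in>{1..m*r}. m dvd k}"
    then obtain j where j: "k = m*j" by auto
    have k1: "1 \<le> k" using k by simp
    have "0 < m * j" using k1 j by linarith
    then have "1 \<le> j" by (simp add: Suc_le_eq)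
    moreover have "m * j \<le> m * r" using k j by auto
    then have "j \<le> r" using assms by simp
    ultimately show "k \<in> (\<lambda>j. m*j) ` {1..r}" using j by auto
  qed
next
  show "(\<lambda>j. m*j) ` {1..r} \<subseteq> {k\<in>{1..m*r}. m dvd k}" using assms by auto
qed

lemma inv8: "(1 + 2*y) * (1 - 2*y + 4*(y*y)) = (1::z8 fps)"
proof -
  have "(1 + 2*y) * (1 - 2*y + 4*(y*y)) = 1 + 8*(y*y*y)" by (simp add: algebra_simps)
  then show ?thesis by (simp add: eight_fps)
qed

lemma step8: "(1 + 2*s + 4*p) * (1 - 2*z + 4*(z*z)) = (1 + 2*(s - z) + 4*(p - s*z + z*z) :: z8 fps)"
proof -
  have "(1 + 2*s + 4*p) * (1 - 2*z + 4*(z*z)) = 1 + 2*(s - z) + 4*(p - s*z + z*z) + 8*(s*z*z - p*z + 2*p*z*z)"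
    by (simp add: algebra_simps)
  then show ?thesis by (simp add: eight_fps)
qed

lemma PiS_dil_X:
  assumes "0 < m"
  shows "(PiS ((\<lambda>j. m*j) ` {1..r}) :: z8 fps) = 1 + 2 * dil m (X r)"
  by (subst PiS_image[OF assms]) (simp only: PiS_X dil_lin[OF assms])

lemma main_expansion:
  fixes \<alpha> N :: nat
  defines "a \<equiv> (2::nat)^\<alpha>" and "c \<equiv> 3 * (2::nat)^\<alpha>"
  defines "A \<equiv> {k\<in>{1..c*N}. \<not> a dvd k \<and> \<not> 3 dvd k}"
  defines "x \<equiv> (X (c*N) :: z8 fps)" and "xc \<equiv> (dil c (X N) :: z8 fps)"
    and "xa \<equiv> (dil a (X (3*N)) :: z8 fps)" and "x3 \<equiv> (dil 3 (X (a*N)) :: z8 fps)"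
  shows "(PiS A :: z8 fps) = 1 + 2*((x + xc - xa) - x3)
            + 4*((x*xc - (x+xc)*xa + xa*xa) - (x + xc - xa)*x3 + x3*x3)"
proof -
  define L where "L = c*N"
  define D where "D = {k\<in>{1..L}. a dvd k}"
  define E where "E = {k\<in>{1..L}. 3 dvd k \<and> \<not> a dvd k}"
  define C where "C = {k\<in>{1..L}. c dvd k}"
  define T where "T = {k\<in>{1..L}. 3 dvd k}"
  have a0: "0 < a" and c0: "0 < c" by (simp_all add: a_def c_def)
  have cop: "c dvd k \<longleftrightarrow> 3 dvd k \<and> a dvd k" for k
  proof
    assume "c dvd k" then show "3 dvd k \<and> a dvd k"
      unfolding c_def a_def by (metis dvd_mult_left dvd_mult_right)
  next
    assume h: "3 dvd k \<and> a dvd k"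
    have "coprime (3::nat) a" unfolding a_def by (simp add: coprime_power_right_iff)
    then show "c dvd k" using h unfolding c_def a_def by (simp add: divides_mult)
  qed
  have U: "{1..L} = A \<union> (D \<union> E)" by (auto simp: A_def D_def E_def L_def)
  have TE: "T = E \<union> C" using cop by (auto simp: T_def E_def C_def)
  have fin: "finite A" "finite D" "finite E" "finite C"
    by (simp_all add: A_def D_def E_def C_def)
  have dAE: "A \<inter> (D \<union> E) = {}" by (auto simp: A_def D_def E_def)
  have dDE: "D \<inter> E = {}" by (auto simp: D_def E_def)
  have dEC: "E \<inter> C = {}" using cop by (auto simp: E_def C_def)
  have "(PiS {1..L} :: z8 fps) = PiS (A \<union> (D \<union> E))" by (simp only: U)
  also have "\<dots> = PiS A * PiS (D \<union> E)" by (rule PiS_union) (use fin dAE in auto)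
  also have "PiS (D \<union> E) = (PiS D * PiS E :: z8 fps)" by (rule PiS_union) (use fin dDE in auto)
  finally have PU: "(PiS {1..L} :: z8 fps) = PiS A * (PiS D * PiS E)" .
  have "(PiS T :: z8 fps) = PiS (E \<union> C)" by (simp only: TE)
  also have "\<dots> = PiS E * PiS C" by (rule PiS_union) (use fin dEC in auto)
  finally have PT: "(PiS T :: z8 fps) = PiS E * PiS C" .
  have eq1: "(PiS {1..L} :: z8 fps) * PiS C = PiS A * PiS D * PiS T"
    using PU PT by (simp add: algebra_simps)
  have D': "D = (\<lambda>j. a*j) ` {1..3*N}"
  proof -
    have "L = a * (3*N)" by (simp add: L_def a_def c_def)
    then show ?thesis unfolding D_def using mult_image[OF a0] by simp
  qed
  have T': "T = (\<lambda>j. 3*j) ` {1..a*N}"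
  proof -
    have "L = 3 * (a*N)" by (simp add: L_def a_def c_def)
    then show ?thesis unfolding T_def using mult_image[of "3::nat"] by simp
  qed
  have C': "C = (\<lambda>j. c*j) ` {1..N}"
    unfolding C_def L_def using mult_image[OF c0] by simp
  have PD: "(PiS D :: z8 fps) = 1 + 2*xa" unfolding D' xa_def by (rule PiS_dil_X[OF a0])
  have PT': "(PiS T :: z8 fps) = 1 + 2*x3" unfolding T' x3_def by (rule PiS_dil_X) simp
  have PC: "(PiS C :: z8 fps) = 1 + 2*xc" unfolding C' xc_def by (rule PiS_dil_X[OF c0])
  have PU': "(PiS {1..L} :: z8 fps) = 1 + 2*x" unfolding x_def L_def by (rule PiS_X)
  define G where "G = (PiS A :: z8 fps)"
  have eq2: "(1 + 2*x) * (1 + 2*xc) = G * (1 + 2*xa) * (1 + 2*x3)"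
    using eq1 PD PT' PC PU' by (simp add: G_def)
  have "G = G * ((1 + 2*xa) * (1 - 2*xa + 4*(xa*xa))) * ((1 + 2*x3) * (1 - 2*x3 + 4*(x3*x3)))"
    by (simp add: inv8)
  also have "\<dots> = (G * (1 + 2*xa) * (1 + 2*x3)) * (1 - 2*xa + 4*(xa*xa)) * (1 - 2*x3 + 4*(x3*x3))"
    by (simp add: algebra_simps)
  also have "\<dots> = (1 + 2*x) * (1 + 2*xc) * (1 - 2*xa + 4*(xa*xa)) * (1 - 2*x3 + 4*(x3*x3))"
    by (simp only: eq2)
  also have "(1 + 2*x) * (1 + 2*xc) = 1 + 2*(x + xc) + 4*(x*xc)"
    by (simp add: algebra_simps)
  also have "(1 + 2*(x + xc) + 4*(x*xc)) * (1 - 2*xa + 4*(xa*xa))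
      = 1 + 2*((x + xc) - xa) + 4*(x*xc - (x+xc)*xa + xa*xa)"
    by (rule step8)
  also have "(1 + 2*((x + xc) - xa) + 4*(x*xc - (x+xc)*xa + xa*xa)) * (1 - 2*x3 + 4*(x3*x3))
      = 1 + 2*((x + xc - xa) - x3) + 4*((x*xc - (x+xc)*xa + xa*xa) - (x + xc - xa)*x3 + x3*x3)"
    by (rule step8)
  finally show ?thesis by (simp add: G_def)
qed

lemma Bbar_coeff:
  fixes \<alpha> N :: nat
  defines "a \<equiv> (2::nat)^\<alpha>" and "c \<equiv> 3 * (2::nat)^\<alpha>"
  defines "A \<equiv> {k\<in>{1..c*N}. \<not> a dvd k \<and> \<not> 3 dvd k}"
  shows "(PiS A :: z8 fps) $ N = of_nat (Bbar a 3 N)"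
proof -
  have c1: "1 \<le> c" by (simp add: c_def)
  have "OP A N = biregular_overpartitions a 3 N"
  proof
    show "OP A N \<subseteq> biregular_overpartitions a 3 N"
      by (auto simp: OP_def biregular_overpartitions_def A_def)
  next
    show "biregular_overpartitions a 3 N \<subseteq> OP A N"
    proof
      fix y assume y: "y \<in> biregular_overpartitions a 3 N"
      obtain P T where yPT: "y = (P,T)" by (cases y)
      have ov: "(P,T) \<in> overpartitions N" and nd: "\<forall>p\<in>#P. \<not> a dvd p \<and> \<not> 3 dvd p"
        using y yPT by (auto simp: biregular_overpartitions_def)
      have pos: "\<forall>p\<in>#P. 0 < p" and s: "sum_mset P = N" using ov by (auto simp: overpartitions_def)
      have "set_mset P \<subseteq> A"
      proof
        fix p assume p: "p \<in># P"
        have "p \<le> N" using mem_le_sum_mset[OF p] s by simp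
        also have "N \<le> c * N" using c1 by simp
        finally show "p \<in> A" using p pos nd by (auto simp: A_def)
      qed
      then show "y \<in> OP A N" using ov yPT by (simp add: OP_def)
    qed
  qed
  moreover have "finite A" "0 \<notin> A" by (simp_all add: A_def)
  ultimately show ?thesis using PiS_coeff[of A N] by (simp add: Bbar_def)
qed





lemma expand_nth:
  fixes x xc xa x3 :: "z8 fps"
  assumes "0 < N"
  shows "(1 + 2*((x + xc - xa) - x3) + 4*((x*xc - (x+xc)*xa + xa*xa) - (x + xc - xa)*x3 + x3*x3)) $ N
   = 2*x$N + 2*xc$N - 2*xa$N - 2*x3$N + 4*(x*xc)$N - 4*(x*xa)$N - 4*(xc*xa)$N + 4*(xa*xa)$N
     - 4*(x*x3)$N - 4*(xc*x3)$N + 4*(xa*x3)$N + 4*(x3*x3)$N"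
proof -
  have e: "(x*xc - (x+xc)*xa + xa*xa) - (x + xc - xa)*x3 + x3*x3
     = x*xc - x*xa - xc*xa + xa*xa - x*x3 - xc*x3 + xa*x3 + x3*x3" by (simp add: algebra_simps)
  have o: "(1::z8 fps) $ N = 0" using assms by simp
  show ?thesis
    unfolding e by (simp only: fps_add_nth fps_sub_nth fps_num_mult_nth o) (simp add: algebra_simps)
qed

lemma nodvd8:
  fixes e N :: nat
  assumes "8 dvd e" "N mod 8 = 6" shows "\<not> e dvd N"
proof
  assume "e dvd N" then have "8 dvd N" using assms(1) by (rule dvd_trans[rotated])
  with assms(2) show False by simp
qed

lemma dv_even_nonsq:
  assumes h: "n mod 8 \<notin> {0,1,4}" shows "even (dv n)"
proof (rule ccontr)
  assume "odd (dv n)"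
  then obtain s where s: "n = s*s" using dv_odd_sq by blast
  have "n \<noteq> s*s" using nonsq[OF h] .
  with s show False by simp
qed

lemma m3:
  fixes m :: nat assumes "(3*m) mod 8 \<in> {2,5,6}" shows "m mod 8 \<notin> {0,1,4}"
proof -
  have "(3*m) mod 8 = (3*(m mod 8)) mod 8" by (simp add: mod_mult_right_eq)
  moreover have "m mod 8 < 8" by simp
  then have "m mod 8 \<in> {0,1,2,3,4,5,6,7}" by auto
  ultimately show ?thesis using assms by auto
qed

lemma m3b:
  fixes m :: nat assumes "(3*m) mod 8 = 6" shows "m mod 8 = 2"
proof -
  have "(3*m) mod 8 = (3*(m mod 8)) mod 8" by (simp add: mod_mult_right_eq)
  moreover have "m mod 8 < 8" by simp
  then have "m mod 8 \<in> {0,1,2,3,4,5,6,7}" by auto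
  ultimately show ?thesis using assms by auto
qed

lemma mod8_main:
  fixes \<alpha> N :: nat
  assumes al: "3 \<le> \<alpha>" and N8: "N mod 8 = 6"
  shows "(of_nat (Bbar (2^\<alpha>) 3 N) :: z8) = 0"
proof -
  define a where "a = (2::nat)^\<alpha>"
  define c where "c = 3 * (2::nat)^\<alpha>"
  define A where "A = {k\<in>{1..c*N}. \<not> a dvd k \<and> \<not> 3 dvd k}"
  define x where "x = (X (c*N) :: z8 fps)"
  define xc where "xc = (dil c (X N) :: z8 fps)"
  define xa where "xa = (dil a (X (3*N)) :: z8 fps)"
  define x3 where "x3 = (dil 3 (X (a*N)) :: z8 fps)"
  have E: "(PiS A :: z8 fps) = 1 + 2*((x + xc - xa) - x3)
            + 4*((x*xc - (x+xc)*xa + xa*xa) - (x + xc - xa)*x3 + x3*x3)"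
    unfolding A_def x_def xc_def xa_def x3_def a_def c_def by (rule main_expansion)
  have B: "(PiS A :: z8 fps) $ N = of_nat (Bbar a 3 N)"
    unfolding A_def a_def c_def by (rule Bbar_coeff)
  have N0: "0 < N" using N8 by (cases N) auto
  have a0: "0 < a" and c0: "0 < c" by (simp_all add: a_def c_def)
  have a8: "8 dvd a"
  proof -
    have "a = 2^(3 + (\<alpha>-3))" using al by (simp add: a_def)
    also have "\<dots> = 8 * 2^(\<alpha>-3)" by (simp add: power_add)
    finally show ?thesis by simp
  qed
  have c8: "8 dvd c" using a8 by (simp add: c_def a_def)
  have am: "a mod 8 = 0" and cm: "c mod 8 = 0" using a8 c8 by simp_all
  have Nc: "N \<le> c*N" and Na: "N \<le> a*N" and N3: "N \<le> 3*N" using a0 c0 by simp_all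
  have x1: "x = dil 1 (X (c*N))" unfolding x_def by (rule dil_1[symmetric])
  define k where "k = N div 2"
  have Nk: "N = 2*k" and k4: "k mod 4 = 3" using N8 by (simp_all add: k_def) presburger+
  have kodd: "odd k" using k4 by presburger
  have hx: "2 * x $ N = 0"
  proof -
    have "x $ N = of_nat (chi (c*N) N)" unfolding x_def using Nc by (rule X_nth)
    moreover have "even (dv k)" using k4 by (intro dv_even_nonsq) (simp; presburger)
    moreover have "even (card (Qs (c*N) N))" using Qs_even[OF kodd] Nk Nc by simp
    ultimately have "x $ N = of_nat (2 * dv k + 2 * card (Qs (c*N) N))"
      and "8 dvd 2 * (2 * dv k + 2 * card (Qs (c*N) N))"
      using dv_double[OF kodd] Nk by (auto simp: chi_def)
    then show ?thesis by (metis of_nat_mult of_nat_numeral z8_of_nat_0)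
  qed
  have hxc: "xc $ N = 0" using nodvd8[OF c8 N8] by (simp add: xc_def dil_nth)
  have hxa: "xa $ N = 0" using nodvd8[OF a8 N8] by (simp add: xa_def dil_nth)
  have p1: "4 * (x*xc) $ N = 0" unfolding x1 xc_def
    by (rule pair0) (use Nc Na N3 a0 c0 am cm local8[OF N8, of 1 c] in auto)
  have p2: "4 * (x*xa) $ N = 0" unfolding x1 xa_def
    by (rule pair0) (use Nc Na N3 a0 c0 am cm local8[OF N8, of 1 a] in auto)
  have p3: "4 * (xc*xa) $ N = 0" unfolding xc_def xa_def
    by (rule pair0) (use Nc Na N3 a0 c0 am cm local8[OF N8, of c a] in auto)
  have p4: "4 * (xa*xa) $ N = 0" unfolding xa_def
    by (rule pair0) (use Nc Na N3 a0 c0 am cm local8[OF N8, of a a] in auto)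
  have p5: "4 * (x*x3) $ N = 0" unfolding x1 x3_def
    by (rule pair0) (use Nc Na N3 a0 c0 am cm local8[OF N8, of 1 3] in auto)
  have p6: "4 * (xc*x3) $ N = 0" unfolding xc_def x3_def
    by (rule pair0) (use Nc Na N3 a0 c0 am cm local8[OF N8, of c 3] in auto)
  have p7: "4 * (xa*x3) $ N = 0" unfolding xa_def x3_def
    by (rule pair0) (use Nc Na N3 a0 c0 am cm local8[OF N8, of a 3] in auto)
  define Y where "Y = (X (a*N) :: z8 fps)"
  have x33: "x3 * x3 = dil 3 (Y * Y)" by (simp add: x3_def Y_def dil_mult)
  have h3: "- 2 * x3 $ N + 4 * (x3*x3) $ N = 0"
  proof (cases "3 dvd N")
    case False
    then show ?thesis unfolding x33 by (simp add: x3_def dil_nth)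
  next
    case True
    define m where "m = N div 3"
    have Nm: "N = 3*m" using True by (simp add: m_def)
    have m8: "m mod 8 = 2" using N8 Nm m3b by simp
    define k' where "k' = m div 2"
    have mk: "m = 2*k'" and k'o: "odd k'" using m8 by (simp_all add: k'_def) presburger+
    have mN: "m \<le> a*N" and kN: "k' \<le> a*N" using Nm mk Na by simp_all
    have x3N: "x3 $ N = Y $ m" by (simp add: x3_def Y_def dil_nth Nm)
    have x33N: "(x3*x3) $ N = (Y*Y) $ m" by (simp add: x33 dil_nth Nm)
    have "4 * (Y*Y) $ m = 4 * (Y $ k' * Y $ k')"
      unfolding mk fps_mult_nth by (rule sym_sum)
    also have "Y $ k' = of_nat (chi (a*N) k')" unfolding Y_def using kN by (rule X_nth)
    also have "4 * ((of_nat (chi (a*N) k') :: z8) * of_nat (chi (a*N) k')) = 4 * of_nat (chi (a*N) k')"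
      by (simp only: mult.assoc[symmetric] four_sq)
    also have "\<dots> = 4 * of_nat (dv k')" by (rule four_chi)
    finally have A1: "4 * (Y*Y) $ m = 4 * of_nat (dv k')" .
    have "Y $ m = of_nat (chi (a*N) m)" unfolding Y_def using mN by (rule X_nth)
    moreover have "even (card (Qs (a*N) m))" using Qs_even[OF k'o] mk mN by simp
    then obtain q where q: "card (Qs (a*N) m) = 2*q" by blast
    ultimately have "2 * Y $ m = 4 * of_nat (dv k') + 8 * of_nat q"
      using dv_double[OF k'o] mk by (simp add: chi_def q algebra_simps)
    then have A2: "2 * Y $ m = 4 * of_nat (dv k')" by (simp add: eight_z8)
    show ?thesis using A1 A2 x3N x33N by simp
  qed
  have "(PiS A :: z8 fps) $ N = 0"
    unfolding E expand_nth[OF N0]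
    using hx hxc hxa p1 p2 p3 p4 p5 p6 p7 h3 by (simp add: algebra_simps)
  with B show ?thesis by (simp add: a_def)
qed

lemma mod4_main:
  fixes \<alpha> N :: nat
  assumes al: "2 \<le> \<alpha>" and N4: "N mod 4 = 2 \<or> N mod 8 = 5"
  shows "2 * (of_nat (Bbar (2^\<alpha>) 3 N) :: z8) = 0"
proof -
  define a where "a = (2::nat)^\<alpha>"
  define c where "c = 3 * (2::nat)^\<alpha>"
  define A where "A = {k\<in>{1..c*N}. \<not> a dvd k \<and> \<not> 3 dvd k}"
  define x where "x = (X (c*N) :: z8 fps)"
  define xc where "xc = (dil c (X N) :: z8 fps)"
  define xa where "xa = (dil a (X (3*N)) :: z8 fps)"
  define x3 where "x3 = (dil 3 (X (a*N)) :: z8 fps)"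
  have E: "(PiS A :: z8 fps) = 1 + 2*((x + xc - xa) - x3)
            + 4*((x*xc - (x+xc)*xa + xa*xa) - (x + xc - xa)*x3 + x3*x3)"
    unfolding A_def x_def xc_def xa_def x3_def a_def c_def by (rule main_expansion)
  have B: "(PiS A :: z8 fps) $ N = of_nat (Bbar a 3 N)"
    unfolding A_def a_def c_def by (rule Bbar_coeff)
  have N0: "0 < N" using N4 by (cases N) auto
  have a0: "0 < a" and c0: "0 < c" by (simp_all add: a_def c_def)
  have a4: "4 dvd a"
  proof -
    have e: "2 + (\<alpha> - 2) = \<alpha>" using al by simp
    have "a = 2^(2 + (\<alpha>-2))" by (simp only: e a_def)
    also have "\<dots> = 4 * 2^(\<alpha>-2)" by (simp add: power_add)
    finally show ?thesis by simp
  qed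
  have c4: "4 dvd c" using a4 by (simp add: c_def a_def)
  have n4: "\<not> 4 dvd N" using N4 by presburger
  have Nc: "N \<le> c*N" and Na: "N \<le> a*N" using a0 c0 by simp_all
  have hx: "4 * x $ N = 0"
  proof -
    have "x $ N = of_nat (chi (c*N) N)" unfolding x_def using Nc by (rule X_nth)
    then have "4 * x $ N = of_nat (4 * dv N)" by (simp add: four_chi)
    moreover have "even (dv N)" using N4 by (intro dv_even_nonsq) (simp; presburger)
    ultimately show ?thesis by (simp only: z8_of_nat_0) auto
  qed
  have hxc: "xc $ N = 0"
  proof -
    have "\<not> c dvd N" using c4 n4 dvd_trans by blast
    then show ?thesis by (simp add: xc_def dil_nth)
  qed
  have hxa: "xa $ N = 0"
  proof -
    have "\<not> a dvd N" using a4 n4 dvd_trans by blast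
    then show ?thesis by (simp add: xa_def dil_nth)
  qed
  have h3: "4 * x3 $ N = 0"
  proof (cases "3 dvd N")
    case False
    then show ?thesis by (simp add: x3_def dil_nth)
  next
    case True
    define m where "m = N div 3"
    have Nm: "N = 3*m" using True by (simp add: m_def)
    have mN: "m \<le> a*N" using Nm Na by simp
    have "x3 $ N = of_nat (chi (a*N) m)" using mN by (simp add: x3_def dil_nth Nm X_nth)
    then have "4 * x3 $ N = of_nat (4 * dv m)" by (simp add: four_chi)
    moreover have "even (dv m)"
    proof (rule dv_even_nonsq, rule m3)
      have "N mod 8 = 2 \<or> N mod 8 = 5 \<or> N mod 8 = 6" using N4 by presburger
      then show "(3*m) mod 8 \<in> {2,5,6}" using Nm by auto
    qed
    ultimately show ?thesis by (simp only: z8_of_nat_0) auto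
  qed
  have "2 * (PiS A :: z8 fps) $ N = 4 * x $ N + 4 * xc $ N - 4 * xa $ N - 4 * x3 $ N
        + 8 * ((x*xc) $ N - (x*xa) $ N - (xc*xa) $ N + (xa*xa) $ N - (x*x3) $ N - (xc*x3) $ N
        + (xa*x3) $ N + (x3*x3) $ N)"
    unfolding E expand_nth[OF N0] by (simp add: algebra_simps)
  then have "2 * (PiS A :: z8 fps) $ N = 0"
    using hx hxc hxa h3 by (simp add: eight_z8)
  with B show ?thesis by (simp add: a_def)
qed

theorem theorem1:
  fixes n \<alpha> :: nat
  shows "(2 \<le> \<alpha> \<longrightarrow> Bbar (2 ^ \<alpha>) 3 (4 * n + 2) mod 4 = 0 \<and> Bbar (2 ^ \<alpha>) 3 (8 * n + 5) mod 4 = 0)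
       \<and> (3 \<le> \<alpha> \<longrightarrow> Bbar (2 ^ \<alpha>) 3 (8 * n + 6) mod 8 = 0)"
proof (intro conjI impI)
  have m4: "B mod 4 = 0" if "2 * (of_nat B :: z8) = 0" for B
  proof -
    have "(of_nat (2*B) :: z8) = 0" using that by simp
    then have "8 dvd 2*B" by (simp only: z8_of_nat_0)
    then show ?thesis by presburger
  qed
  assume "2 \<le> \<alpha>"
  show "Bbar (2 ^ \<alpha>) 3 (4 * n + 2) mod 4 = 0"
    by (rule m4, rule mod4_main[OF \<open>2 \<le> \<alpha>\<close>]) presburger
  show "Bbar (2 ^ \<alpha>) 3 (8 * n + 5) mod 4 = 0"
    by (rule m4, rule mod4_main[OF \<open>2 \<le> \<alpha>\<close>]) presburger
next
  assume "3 \<le> \<alpha>"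
  then have "(of_nat (Bbar (2^\<alpha>) 3 (8*n+6)) :: z8) = 0" by (intro mod8_main) auto
  then have "8 dvd Bbar (2^\<alpha>) 3 (8*n+6)" by (simp only: z8_of_nat_0)
  then show "Bbar (2 ^ \<alpha>) 3 (8 * n + 6) mod 8 = 0" by simp
qed


end
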